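(* Let $\mathbf{R}=(\mathbf{R}^{\Rightarrow},\mathbf{R}^{\mathrm{o}})$ and let $M$ be an $\mathbf{R}$-ordered model. For every Boolean formula $A$ and world $w_1$ of $M$: if $w_1\models A$, then $w_1\in\max_{\succeq_N}(\Vert A\Vert)$ or there exists $w_2$ with $w_2\succ_N w_1$ and $w_2\in\max_{\succeq_N}(\Vert A\Vert)$.
   Context: Boolean formulas over propositional letters; $\models_{\mathrm{PL}}$ classical entailment. $\mathbf{R}^{\Rightarrow}$ is a finite set of normality conditionals $A\Rightarrow B$ ($A,B$ Boolean; body $b=A$, head $h=B$) and $\mathbf{R}^{\mathrm{o}}$ a finite set of obligations $\bigcirc(B/A)$. For $X\subseteq\mathbf{R}^{\Rightarrow}$, $\mathrm{m}(X)=\{A\rightarrow B:A\Rightarrow B\in X\}$. Standing assumption (coherence): there is no nonempty $X\subseteq\mathbf{R}^{\Rightarrow}$ with $\mathrm{m}(X)\models_{\mathrm{PL}}\bigwedge_{r\in X}\neg b(r)$. LM-sequence: $\varepsilon(X)=\{A\Rightarrow B\in\mathbf{R}^{\Rightarrow}:\mathrm{m}(X)\models_{\mathrm{PL}}\neg A\}$, $\mathcal{E}_0=\mathbf{R}^{\Rightarrow}$, $\mathcal{E}_{i+1}=\varepsilon(\mathcal{E}_i)$; the order $m$ is the least $k$ with $\mathcal{E}_l=\mathcal{E}_k$ for all $l\geq k$, and $\mathcal{E}_\infty=\mathcal{E}_m$. Ranked partition: $\Delta_i=\mathcal{E}_i\setminus\mathcal{E}_{i+1}$ for $0\le i\le m-1$,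 $\Delta_m=\mathcal{E}_\infty$. For $X\subseteq\mathbf{R}^{\Rightarrow}$ let $\tau(X)=\langle|\Delta_{m-1}\cap X|,\ldots,|\Delta_0\cap X|\rangle$; $X\gtrsim Y$ iff $\tau(X)=\tau(Y)$ or, at the first coordinate where they differ, the entry of $\tau(X)$ is smaller. An $\mathbf{R}$-ordered model is $(W,\succeq_N,\succeq_I,v)$ with $W\neq\emptyset$, $v$ a valuation, $w_1\succeq_N w_2$ iff $F(w_1)\gtrsim F(w_2)$ where $F(w)=\{r\in\mathbf{R}^{\Rightarrow}:w\models b(r)\wedge\neg h(r)\}$ (and $\succeq_I$ the ideality ordering determined by $\mathbf{R}^{\mathrm{o}}$, irrelevant here). $w\succ_N u$ iff $w\succeq_N u$ and not $u\succeq_N w$. $\max_{\succeq_N}(X)=\{w\in X:\forall u\in X(u\succeq_N w\Rightarrow w\succeq_N u)\}$; $\Vert A\Vert$ = set of worlds where $A$ holds. *)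

theory Defs
  imports Main
begin

datatype 'p form =
    Var 'p
  | Bot
  | Neg "'p form"
  | Conj "'p form" "'p form"
  | Disj "'p form" "'p form"
  | Imp "'p form" "'p form"

primrec eval :: "('p \<Rightarrow> bool) \<Rightarrow> 'p form \<Rightarrow> bool" where
  "eval val (Var p) = val p"
| "eval val Bot = False"
| "eval val (Neg a) = (\<not> eval val a)"
| "eval val (Conj a b) = (eval val a \<and> eval val b)"
| "eval val (Disj a b) = (eval val a \<or> eval val b)"
| "eval val (Imp a b) = (eval val a \<longrightarrow> eval val b)"

definition entails :: "'p form set \<Rightarrow> 'p form \<Rightarrow> bool" where
  "entails \<Gamma> A \<longleftrightarrow> (\<forall>val. (\<forall>B\<in>\<Gamma>. eval val B) \<longrightarrow> eval val A)"

definition entails_all :: "'p form set \<Rightarrow> 'p form set \<Rightarrow> bool" where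
  "entails_all \<Gamma> \<Delta> \<longleftrightarrow> (\<forall>val. (\<forall>B\<in>\<Gamma>. eval val B) \<longrightarrow> (\<forall>C\<in>\<Delta>. eval val C))"

text \<open>A normality conditional A \<Rightarrow> B is represented as the pair (A, B): body = fst, head = snd.\<close>
type_synonym 'p cond = "'p form \<times> 'p form"

definition body :: "'p cond \<Rightarrow> 'p form" where "body r = fst r"
definition head :: "'p cond \<Rightarrow> 'p form" where "head r = snd r"

definition mat :: "'p cond set \<Rightarrow> 'p form set" where
  "mat X = {Imp (body r) (head r) | r. r \<in> X}"

definition coherent :: "'p cond set \<Rightarrow> bool" where
  "coherent Rn \<longleftrightarrow> \<not> (\<exists>X. X \<subseteq> Rn \<and> X \<noteq> {} \<and>
      entails_all (mat X) ((\<lambda>r. Neg (body r)) ` X))"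

definition eps :: "'p cond set \<Rightarrow> 'p cond set \<Rightarrow> 'p cond set" where
  "eps Rn X = {r \<in> Rn. entails (mat X) (Neg (body r))}"

definition LM :: "'p cond set \<Rightarrow> nat \<Rightarrow> 'p cond set" where
  "LM Rn i = (eps Rn ^^ i) Rn"

definition LM_order :: "'p cond set \<Rightarrow> nat" where
  "LM_order Rn = (LEAST k. \<forall>l\<ge>k. LM Rn l = LM Rn k)"

definition LM_inf :: "'p cond set \<Rightarrow> 'p cond set" where
  "LM_inf Rn = LM Rn (LM_order Rn)"

definition Delta :: "'p cond set \<Rightarrow> nat \<Rightarrow> 'p cond set" where
  "Delta Rn i = (if i < LM_order Rn then LM Rn i - LM Rn (Suc i) else LM_inf Rn)"

definition tau :: "'p cond set \<Rightarrow> 'p cond set \<Rightarrow> nat list" where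
  "tau Rn X = map (\<lambda>i. card (Delta Rn i \<inter> X)) (rev [0..<LM_order Rn])"

definition set_geq :: "'p cond set \<Rightarrow> 'p cond set \<Rightarrow> 'p cond set \<Rightarrow> bool" where
  "set_geq Rn X Y \<longleftrightarrow> tau Rn X = tau Rn Y \<or>
     (\<exists>j < length (tau Rn X). (\<forall>i<j. tau Rn X ! i = tau Rn Y ! i) \<and> tau Rn X ! j < tau Rn Y ! j)"

definition falsified :: "'p cond set \<Rightarrow> ('w \<Rightarrow> 'p \<Rightarrow> bool) \<Rightarrow> 'w \<Rightarrow> 'p cond set" where
  "falsified Rn v w = {r \<in> Rn. eval (v w) (body r) \<and> \<not> eval (v w) (head r)}"

definition geqN :: "'p cond set \<Rightarrow> ('w \<Rightarrow> 'p \<Rightarrow> bool) \<Rightarrow> 'w \<Rightarrow> 'w \<Rightarrow> bool" where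
  "geqN Rn v w1 w2 \<longleftrightarrow> set_geq Rn (falsified Rn v w1) (falsified Rn v w2)"

definition gtN :: "'p cond set \<Rightarrow> ('w \<Rightarrow> 'p \<Rightarrow> bool) \<Rightarrow> 'w \<Rightarrow> 'w \<Rightarrow> bool" where
  "gtN Rn v w1 w2 \<longleftrightarrow> geqN Rn v w1 w2 \<and> \<not> geqN Rn v w2 w1"

definition ext :: "'w set \<Rightarrow> ('w \<Rightarrow> 'p \<Rightarrow> bool) \<Rightarrow> 'p form \<Rightarrow> 'w set" where
  "ext W v A = {w \<in> W. eval (v w) A}"

definition maxN :: "'p cond set \<Rightarrow> ('w \<Rightarrow> 'p \<Rightarrow> bool) \<Rightarrow> 'w set \<Rightarrow> 'w set" where
  "maxN Rn v X = {w \<in> X. \<forall>u\<in>X. geqN Rn v u w \<longrightarrow> geqN Rn v w u}"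

end

theory Submission
  imports Defs
begin

definition ltl :: "nat list \<Rightarrow> nat list \<Rightarrow> bool" where
  "ltl x y \<longleftrightarrow> length x = length y \<and> (\<exists>j < length x. (\<forall>i<j. x ! i = y ! i) \<and> x ! j < y ! j)"

lemma ltl_lex: assumes "ltl x y" shows "(x, y) \<in> lex less_than"
proof -
  from assms obtain j where L: "length x = length y" and j: "j < length x"
    and eq: "\<forall>i<j. x ! i = y ! i" and lt: "x ! j < y ! j" unfolding ltl_def by blast
  have tk: "take j x = take j y"
    using eq j L by (intro nth_equalityI) auto
  have "x = take j x @ x ! j # drop (Suc j) x" using j by (simp add: id_take_nth_drop)
  moreover have "y = take j x @ y ! j # drop (Suc j) y" using j L tk by (metis id_take_nth_drop)
  ultimately show ?thesis using L lt unfolding lex_conv by blast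
qed

lemma wf_ltl: "wf {(x, y). ltl x y}"
  by (rule wf_subset[OF wf_lex[OF wf_less_than]]) (auto dest: ltl_lex)

lemma ltl_total: assumes "length x = length y" "x \<noteq> y" shows "ltl x y \<or> ltl y x"
proof -
  have "\<exists>j. j < length x \<and> x ! j \<noteq> y ! j" using assms nth_equalityI by blast
  define j where "j = (LEAST j. j < length x \<and> x ! j \<noteq> y ! j)"
  have j: "j < length x \<and> x ! j \<noteq> y ! j"
    using LeastI_ex[OF \<open>\<exists>j. _\<close>] unfolding j_def .
  have eq: "\<forall>i<j. x ! i = y ! i"
  proof (intro allI impI)
    fix i assume "i < j"
    then have "\<not> (i < length x \<and> x ! i \<noteq> y ! i)" unfolding j_def by (rule not_less_Least)
    then show "x ! i = y ! i" using \<open>i < j\<close> j by auto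
  qed
  show ?thesis
  proof (cases "x ! j < y ! j")
    case True then show ?thesis using j eq assms unfolding ltl_def by blast
  next
    case False then have "y ! j < x ! j" using j by auto
    then show ?thesis using j eq assms unfolding ltl_def by force
  qed
qed

lemma set_geq_iff: "set_geq Rn X Y \<longleftrightarrow> tau Rn X = tau Rn Y \<or> ltl (tau Rn X) (tau Rn Y)"
  unfolding set_geq_def ltl_def by (simp add: tau_def)

lemma len_tau: "length (tau Rn X) = length (tau Rn Y)"
  by (simp add: tau_def)

theorem proposition1:
  fixes Rn :: "'p cond set" and W :: "'w set" and v :: "'w \<Rightarrow> 'p \<Rightarrow> bool"
    and A :: "'p form" and w1 :: 'w
  assumes "finite Rn" and "coherent Rn"
    and "W \<noteq> {}"
    and "w1 \<in> W" and "eval (v w1) A"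
  shows "w1 \<in> maxN Rn v (ext W v A) \<or>
         (\<exists>w2 \<in> W. gtN Rn v w2 w1 \<and> w2 \<in> maxN Rn v (ext W v A))"
proof -
  define t where "t w = tau Rn (falsified Rn v w)" for w
  have geq: "geqN Rn v a b \<longleftrightarrow> t a = t b \<or> ltl (t a) (t b)" for a b
    unfolding geqN_def t_def set_geq_iff ..
  have tot: "t a = t b \<or> ltl (t a) (t b) \<or> ltl (t b) (t a)" for a b
    using ltl_total[OF len_tau] unfolding t_def by blast
  let ?E = "ext W v A"
  have w1E: "w1 \<in> ?E" using assms unfolding ext_def by auto
  have "wf (inv_image {(x, y). ltl x y} t)" by (rule wf_inv_image[OF wf_ltl])
  then obtain w2 where w2E: "w2 \<in> ?E" and min: "\<And>u. u \<in> ?E \<Longrightarrow> \<not> ltl (t u) (t w2)"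
    using wfE_min[of _ w1 ?E] w1E by (metis case_prodI in_inv_image mem_Collect_eq)
  have maxI: "w \<in> maxN Rn v ?E" if "w \<in> ?E" "t w = t w2" for w
    using that min unfolding maxN_def geq by auto
  have w2max: "w2 \<in> maxN Rn v ?E" using maxI w2E by simp
  show ?thesis
  proof (cases "w1 \<in> maxN Rn v ?E")
    case True then show ?thesis by simp
  next
    case False
    then have ne: "t w1 \<noteq> t w2" using maxI w1E by blast
    have "\<not> ltl (t w1) (t w2)" using min w1E by blast
    then have "gtN Rn v w2 w1" using tot[of w2 w1] ne unfolding gtN_def geq by auto
    moreover have "w2 \<in> W" using w2E unfolding ext_def by auto
    ultimately show ?thesis using w2max by blast
  qed
qed

end
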